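(* Let $K\ge 2$ be an integer and $M=\frac{m}{K}$ with $m\in\{1,\dots,K-1\}$. For $L\in\{1,\dots,K-1\}$ let $j^*=\left\lceil m\left(1-\frac{L}{K}\right)\right\rceil$, $$R_K(M,L)=1+\frac{\sum_{i=\max(0,m-L+1)}^{j^*-1}\binom{K-L}{i}\binom{L-1}{m-i}+\sum_{i=j^*}^{\min(m,K-L-1)}\binom{K-L-1}{i}\binom{L}{m-i}}{\binom{K}{m}},$$ and $R_K(M)=\max_{0<L<K}R_K(M,L)$. Let $\hat R_K(M)=K\left(1-\frac{M}{2}\right)\min\left\{\frac{1}{1+\frac{MK}{2}},\frac{2}{K}\right\}$. Then $$R_K(M)\le \hat R_K(M)\quad\text{for all } K \text{ and all } M\in\left\{\tfrac{2}{K},\tfrac{4}{K},\dots,\tfrac{2(\lceil K/2\rceil-1)}{K}\right\},$$ and the inequality is strict except when $K$ is odd and $M=\frac{K-1}{K}$.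
   Context: $\hat R_K(M)$ is the worst-case rate of the Maddah-Ali–Niesen coded caching scheme with $N=2$ files, $K$ users and cache size $M$. Binomial coefficients $\binom{a}{b}$ are $0$ when $b<0$ or $b>a$, and empty sums are $0$. *)

theory Defs
  imports Complex_Main
begin

definition jstar :: "nat \<Rightarrow> nat \<Rightarrow> nat \<Rightarrow> nat" where
  "jstar K m L = nat \<lceil>real m * (1 - real L / real K)\<rceil>"

text \<open>R_K(M,L) with M = m/K. The lower limit max(0, m-L+1) is the truncated
  natural subtraction m+1-L; the index set {a..<j*} is the range a..j*-1 (empty if j*=0).\<close>
definition R_KL :: "nat \<Rightarrow> nat \<Rightarrow> nat \<Rightarrow> real" where
  "R_KL K m L = 1 +
     ((\<Sum>i\<in>{m + 1 - L ..< jstar K m L}. real ((K - L) choose i) * real ((L - 1) choose (m - i)))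
    + (\<Sum>i\<in>{jstar K m L .. min m (K - L - 1)}. real ((K - L - 1) choose i) * real (L choose (m - i))))
     / real (K choose m)"

definition R_K :: "nat \<Rightarrow> nat \<Rightarrow> real" where
  "R_K K m = Max ((\<lambda>L. R_KL K m L) ` {1..<K})"

definition R_hat :: "nat \<Rightarrow> real \<Rightarrow> real" where
  "R_hat K M = real K * (1 - M / 2) * min (1 / (1 + M * real K / 2)) (2 / real K)"

end

theory Submission imports Defs begin

lemma telescope:
  fixes n p m :: nat
  assumes "1 \<le> j" "j \<le> m"
  shows "(\<Sum>i<j. (Suc n choose i) * (p choose (m - i))) + (\<Sum>i\<in>{j..m}. (n choose i) * (Suc p choose (m - i)))
         + (n choose (j - 1)) * (p choose (m - j)) = (n + Suc p) choose m"
  using assms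
proof (induction j)
  case 0 then show ?case by simp
next
  case (Suc j)
  show ?case
  proof (cases "j = 0")
    case True
    obtain m' where m': "m = Suc m'" using Suc.prems by (cases m) auto
    have "(\<Sum>i\<le>m. (n choose i) * (Suc p choose (m - i))) = (n + Suc p) choose m"
      by (rule vandermonde)
    moreover have "(\<Sum>i\<le>m. (n choose i) * (Suc p choose (m - i))) = (Suc p choose m) + (\<Sum>i\<in>{1..m}. (n choose i) * (Suc p choose (m - i)))"
      by (simp add: atMost_atLeast0 sum.atLeast_Suc_atMost)
    ultimately show ?thesis using True m' by simp
  next
    case False
    have IH: "(\<Sum>i<j. (Suc n choose i) * (p choose (m - i))) + (\<Sum>i\<in>{j..m}. (n choose i) * (Suc p choose (m - i)))
         + (n choose (j - 1)) * (p choose (m - j)) = (n + Suc p) choose m"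
      using Suc False by simp
    obtain j' where j': "j = Suc j'" using False by (cases j) auto
    obtain q where q: "m - j = Suc q" "m - Suc j = q" using Suc.prems by (metis Suc_diff_Suc Suc_le_eq diff_Suc_Suc)
    have split: "(\<Sum>i\<in>{j..m}. (n choose i) * (Suc p choose (m - i))) = (n choose j) * (Suc p choose (m - j)) + (\<Sum>i\<in>{Suc j..m}. (n choose i) * (Suc p choose (m - i)))"
      using Suc.prems by (simp add: sum.atLeast_Suc_atMost)
    have key: "(Suc n choose j) * (p choose (m - j)) + (n choose j) * (p choose (m - Suc j))
       = (n choose j) * (Suc p choose (m - j)) + (n choose (j - 1)) * (p choose (m - j))"
      unfolding q(1) q(2) by (simp add: j' algebra_simps)
    show ?thesis using IH split key by simp
  qed
qed

lemma R_KL_form: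
  assumes L1: "1 \<le> L" and LK: "L < K" and m1: "1 \<le> m" and mK: "m < K"
  shows "\<exists>S c. 1 \<le> c \<and> S + c = (K - 1) choose m \<and> R_KL K m L = 1 + real S / real (K choose m)"
proof -
  define j where "j = jstar K m L"
  define n where "n = K - L - 1"
  define p where "p = L - 1"
  define x where "x = real m * (1 - real L / real K)"
  have Kpos: "real K > 0" using LK by simp
  have x_eq: "x = real m * real (K - L) / real K" using LK Kpos unfolding x_def
    by (simp add: of_nat_diff field_simps)
  have x_pos: "x > 0" using x_eq LK m1 Kpos by simp
  have x_le_KL: "x \<le> real (K - L)" unfolding x_eq using mult_right_mono[of "real m" "real K" "real (K-L)"] mK Kpos
    by (simp add: divide_le_eq mult.commute)
  have x_le_m: "x \<le> real m" unfolding x_def using LK by (simp add: mult_left_le)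
  have mx: "real m - x = real m * real L / real K" unfolding x_def using Kpos by (simp add: field_simps)
  have mx_lt: "real m - x < real L" unfolding mx using mK L1 Kpos
    by (simp add: divide_less_eq)
  have j_ge: "real j \<ge> x" unfolding j_def jstar_def x_def[symmetric]
    using x_pos by linarith
  have cj: "\<lceil>x\<rceil> \<le> int (K - L)" using x_le_KL by (simp add: ceiling_le_iff)
  have cm: "\<lceil>x\<rceil> \<le> int m" using x_le_m by (simp add: ceiling_le_iff)
  have cp: "\<lceil>x\<rceil> > 0" using x_pos by simp
  have j1: "1 \<le> j" unfolding j_def jstar_def x_def[symmetric] using cp by linarith
  have jm: "j \<le> m" unfolding j_def jstar_def x_def[symmetric] using cm by linarith
  have jn: "j - 1 \<le> n" unfolding n_def j_def jstar_def x_def[symmetric] using cj by linarith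
  have mj: "m < j + L" using j_ge mx_lt by linarith
  hence mjp: "m - j \<le> p" unfolding p_def by linarith
  define c where "c = (n choose (j - 1)) * (p choose (m - j))"
  have c1: "1 \<le> c" unfolding c_def using jn mjp by (simp add: Suc_le_eq)
  define S1 where "S1 = (\<Sum>i<j. (Suc n choose i) * (p choose (m - i)))"
  define S2 where "S2 = (\<Sum>i\<in>{j..m}. (n choose i) * (Suc p choose (m - i)))"
  have nK: "n + Suc p = K - 1" unfolding n_def p_def using LK L1 by simp
  have tel: "S1 + S2 + c = (K - 1) choose m"
    unfolding S1_def S2_def c_def nK[symmetric] using telescope[OF j1 jm] .
  have SnK: "Suc n = K - L" "Suc p = L" unfolding n_def p_def using LK L1 by auto
  have e1: "(\<Sum>i\<in>{m + 1 - L ..< j}. real ((K - L) choose i) * real ((L - 1) choose (m - i))) = real S1"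
  proof -
    have "(\<Sum>i\<in>{m + 1 - L ..< j}. ((K - L) choose i) * ((L - 1) choose (m - i))) = S1"
      unfolding S1_def SnK(1)[symmetric] p_def
      using L1 by (intro sum.mono_neutral_left) auto
    then show ?thesis by (metis (no_types, lifting) of_nat_mult of_nat_sum sum.cong)
  qed
  have e2: "(\<Sum>i\<in>{j .. min m (K - L - 1)}. real ((K - L - 1) choose i) * real (L choose (m - i))) = real S2"
  proof -
    have "(\<Sum>i\<in>{j .. min m n}. (n choose i) * (Suc p choose (m - i))) = S2"
      unfolding S2_def
      by (rule sum.mono_neutral_left) auto
    then show ?thesis unfolding n_def SnK(2)[symmetric] by (metis (no_types, lifting) of_nat_mult of_nat_sum sum.cong)
  qed
  have "R_KL K m L = 1 + real (S1 + S2) / real (K choose m)"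
    unfolding R_KL_def e1[unfolded j_def] e2[unfolded j_def] by simp
  then show ?thesis using tel c1 by (intro exI[of _ "S1 + S2"] exI[of _ c]) auto
qed

lemma ratio:
  assumes "m < K"
  shows "real ((K - 1) choose m) / real (K choose m) = real (K - m) / real K"
proof -
  have pos: "K choose m > 0" using assms by simp
  have "(K - m) * (K choose m) = K * ((K - 1) choose m)" by (rule binomial_absorb_comp)
  hence "real (K - m) * real (K choose m) = real K * real ((K - 1) choose m)"
    by (metis of_nat_mult)
  then show ?thesis using pos assms by (simp add: field_simps)
qed

theorem proposition2:
  fixes K t :: nat
  assumes "K \<ge> 2" and "1 \<le> t" and "t \<le> nat \<lceil>real K / 2\<rceil> - 1"
  shows "R_K K (2 * t) \<le> R_hat K (real (2 * t) / real K)
       \<and> (R_K K (2 * t) < R_hat K (real (2 * t) / real K)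
            \<longleftrightarrow> \<not> (odd K \<and> real (2 * t) / real K = (real K - 1) / real K))"
proof -
  define m where "m = 2 * t"
  have ceil: "nat \<lceil>real K / 2\<rceil> = (K + 1) div 2"
  proof (cases "even K")
    case True
    then obtain a where "K = 2 * a" by blast
    then show ?thesis by simp
  next
    case False
    then obtain a where a: "K = 2 * a + 1" using oddE by blast
    have "\<lceil>real K / 2\<rceil> = int a + 1" unfolding a
      by (intro ceiling_unique) auto
    then show ?thesis using a by simp
  qed
  have mK: "m < K" using assms(2,3) unfolding ceil m_def by presburger
  have m1: "1 \<le> m" using assms(2) unfolding m_def by simp
  have Kpos: "real K > 0" using assms(1) by simp
  have fin: "finite ((\<lambda>L. R_KL K m L) ` {1..<K})" by simp
  have ne: "(\<lambda>L. R_KL K m L) ` {1..<K} \<noteq> {}" using assms(1) by auto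
  have form: "\<And>L. L \<in> {1..<K} \<Longrightarrow> \<exists>S c. 1 \<le> c \<and> S + c = (K - 1) choose m \<and> R_KL K m L = 1 + real S / real (K choose m)"
    using R_KL_form mK m1 by auto
  show ?thesis
  proof (cases "odd K \<and> m = K - 1")
    case True
    have all1: "\<And>L. L \<in> {1..<K} \<Longrightarrow> R_KL K m L = 1"
    proof -
      fix L assume "L \<in> {1..<K}"
      then obtain S c where "1 \<le> c" "S + c = (K - 1) choose m" "R_KL K m L = 1 + real S / real (K choose m)"
        using form by blast
      moreover have "(K - 1) choose m = 1" using True by simp
      ultimately show "R_KL K m L = 1" by simp
    qed
    have img: "(\<lambda>L. R_KL K m L) ` {1..<K} = {1}" using all1 ne by auto
    have RK: "R_K K m = 1" unfolding R_K_def img by simp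
    obtain a where a: "K = 2 * a + 1" using True oddE by blast
    have ta: "t = a" using True a unfolding m_def by simp
    have Mv: "real (2 * t) / real K = (real K - 1) / real K" using True m_def Kpos a ta by simp
    have k0: "real (2*a+1) > 0" by simp
    have e1: "real (2 * a) / real (2 * a + 1) * real (2 * a + 1) / 2 = real a" using k0 by simp
    have e2: "min (1 / (1 + real a)) (2 / real (2 * a + 1)) = 1 / (1 + real a)"
      by (simp add: min_def field_simps)
    have e3: "real (2 * a + 1) * (1 - real (2 * a) / real (2 * a + 1) / 2) = 1 + real a"
      using k0 by (simp add: field_simps)
    have "R_hat K (real (2 * t) / real K) = 1"
      unfolding R_hat_def a ta e1 e2 e3 by simp
    then show ?thesis using RK Mv True unfolding m_def by simp
  next
    case False
    have Km: "m + 2 \<le> K" using False mK unfolding m_def by presburger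
    have hat: "R_hat K (real m / real K) = 1 + real (K - m) / real K"
    proof -
      have le: "2 / real K \<le> 1 / (1 + real m / real K * real K / 2)"
        using Km Kpos unfolding m_def by (simp add: field_simps)
      have "R_hat K (real m / real K) = real K * (1 - real m / real K / 2) * (2 / real K)"
        unfolding R_hat_def using le by (simp add: min_absorb2)
      also have "\<dots> = 1 + real (K - m) / real K" using Kpos Km
        by (simp add: of_nat_diff field_simps)
      finally show ?thesis .
    qed
    have lt: "\<And>L. L \<in> {1..<K} \<Longrightarrow> R_KL K m L < 1 + real (K - m) / real K"
    proof -
      fix L assume "L \<in> {1..<K}"
      then obtain S c where h: "1 \<le> c" "S + c = (K - 1) choose m" "R_KL K m L = 1 + real S / real (K choose m)"
        using form by blast
      have pos: "real (K choose m) > 0" using mK by simp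
      have "real S < real ((K - 1) choose m)" using h by linarith
      hence "real S / real (K choose m) < real ((K - 1) choose m) / real (K choose m)"
        using pos by (simp add: divide_strict_right_mono)
      then show "R_KL K m L < 1 + real (K - m) / real K" using h(3) ratio[OF mK] by simp
    qed
    have "R_K K m < 1 + real (K - m) / real K"
      unfolding R_K_def using fin ne lt by (simp add: Max_less_iff)
    moreover have "\<not> (odd K \<and> real (2 * t) / real K = (real K - 1) / real K)"
    proof
      assume "odd K \<and> real (2 * t) / real K = (real K - 1) / real K"
      hence "real (2 * t) = real K - 1" using Kpos by (simp add: divide_cancel_right)
      hence "m = K - 1" unfolding m_def by linarith
      then show False using Km by simp
    qed
    ultimately show ?thesis using hat unfolding m_def by simp
  qed
qed

end
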